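(* Let $T$ be an invertible bilateral weighted (forward) shift on $\ell^2(\mathbb{Z})$, i.e. $Te_n=w_ne_{n+1}$ for $n\in\mathbb{Z}$ with weights satisfying $0<\inf_n|w_n|\le\sup_n|w_n|<\infty$, and let $B=T^{-1}$. Let $(n_k)_{k\in\mathbb{N}}$ be an increasing sequence of positive integers, and let $\mathcal{M}$ be the closed subspace of $\ell^2(\mathbb{Z})$ spanned by $\{e_{m_i}:i\in\mathbb{N}\}$ for some integers $m_i$, with $T^{n_k}\mathcal{M}\subseteq\mathcal{M}$ for all $k$. If $T^{n_k}e_{m_i}\to0$ as $k\to\infty$ for some $i$, then $T^{n_k}e_{m_r}\to0$ for all $r\in\mathbb{N}$. If $\|T^{n_k}e_{m_i}\|\,\|B^{n_k}e_{m_j}\|\to0$ as $k\to\infty$ for some $i,j$, then $\|T^{n_k}e_{m_r}\|\,\|B^{n_k}e_{m_p}\|\to0$ for all $r,p\in\mathbb{N}$.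
   Context: $(e_n)_{n\in\mathbb{Z}}$ is the canonical orthonormal basis of $\ell^2(\mathbb{Z})$. *)

theory Defs
  imports "HOL-Analysis.Analysis"
begin

definition ell2 :: "(int \<Rightarrow> complex) set" where
  "ell2 = {x. (\<lambda>n. (norm (x n))\<^sup>2) summable_on UNIV}"

definition l2norm :: "(int \<Rightarrow> complex) \<Rightarrow> real" where
  "l2norm x = sqrt (\<Sum>\<^sub>\<infinity>n. (norm (x n))\<^sup>2)"

definition e :: "int \<Rightarrow> (int \<Rightarrow> complex)" where
  "e n = (\<lambda>k. if k = n then 1 else 0)"

text \<open>Bilateral weighted forward shift: T e_n = w_n e_(n+1).\<close>
definition wshift :: "(int \<Rightarrow> complex) \<Rightarrow> (int \<Rightarrow> complex) \<Rightarrow> (int \<Rightarrow> complex)" where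
  "wshift w x = (\<lambda>k. w (k - 1) * x (k - 1))"

definition lin_span :: "(int \<Rightarrow> complex) set \<Rightarrow> (int \<Rightarrow> complex) set" where
  "lin_span S = {y. \<exists>F c. finite F \<and> F \<subseteq> S \<and> y = (\<lambda>k. \<Sum>v\<in>F. c v * v k)}"

definition closed_span :: "(int \<Rightarrow> complex) set \<Rightarrow> (int \<Rightarrow> complex) set" where
  "closed_span S = {x \<in> ell2. \<forall>\<epsilon>>0. \<exists>y\<in>lin_span S. l2norm (\<lambda>k. x k - y k) < \<epsilon>}"

end

theory Submission
  imports Defs
begin


definition sv :: "complex \<Rightarrow> int \<Rightarrow> int \<Rightarrow> complex" where
  "sv c b = (\<lambda>k. if k = b then c else 0)"

lemma e_sv: "e b = sv 1 b" by (simp add: e_def sv_def)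

lemma sv_sq: "(\<lambda>k. (norm (sv c b k))\<^sup>2) = (\<lambda>k. if k \<in> {b} then (norm c)\<^sup>2 else 0)"
  by (auto simp: sv_def)

lemma sv_ell2: "sv c b \<in> ell2"
proof -
  have "(\<lambda>k. (norm (sv c b k))\<^sup>2) summable_on UNIV"
    by (subst summable_on_cong_neutral[where T="{b}" and g="\<lambda>k. (norm c)\<^sup>2"]) (auto simp: sv_def)
  then show ?thesis unfolding ell2_def by simp
qed

lemma sv_norm: "l2norm (sv c b) = norm c"
proof -
  have "infsum (\<lambda>k. (norm (sv c b k))\<^sup>2) UNIV = infsum (\<lambda>k. (norm c)\<^sup>2) {b}"
    by (rule infsum_cong_neutral) (auto simp: sv_def)
  then show ?thesis unfolding l2norm_def by simp
qed

lemma wshift_sv: "wshift w (sv c b) = sv (c * w b) (b+1)"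
  by (auto simp: wshift_def sv_def fun_eq_iff)

lemma T_pow: "(wshift w ^^ N) (sv c b) = sv (c * (\<Prod>j<N. w (b + int j))) (b + int N)"
proof (induction N)
  case 0 then show ?case by simp
next
  case (Suc N)
  show ?case by (simp add: Suc wshift_sv mult.assoc algebra_simps)
qed

lemma B_sv:
  assumes B_inv: "\<forall>x\<in>ell2. B x \<in> ell2 \<and> B (wshift w x) = x \<and> wshift w (B x) = x"
    and nz: "w (b-1) \<noteq> 0"
  shows "B (sv c b) = sv (c / w (b-1)) (b-1)"
proof -
  have "wshift w (sv (c / w (b-1)) (b-1)) = sv c b" using nz by (simp add: wshift_sv)
  then show ?thesis using B_inv sv_ell2 by metis
qed

lemma B_pow:
  assumes B_inv: "\<forall>x\<in>ell2. B x \<in> ell2 \<and> B (wshift w x) = x \<and> wshift w (B x) = x"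
    and nz: "\<And>j. w j \<noteq> 0"
  shows "(B ^^ N) (sv c b) = sv (c / (\<Prod>j<N. w (b - int N + int j))) (b - int N)"
proof (induction N)
  case 0 then show ?case by simp
next
  case (Suc N)
  have p: "(\<Prod>j<Suc N. w (b - int (Suc N) + int j)) = w (b - int N - 1) * (\<Prod>j<N. w (b - int N + int j))"
    by (subst prod.lessThan_Suc_shift) (simp add: algebra_simps)
  have "(B ^^ Suc N) (sv c b) = B ((B^^N) (sv c b))" by simp
  also have "\<dots> = sv (c / (\<Prod>j<N. w (b - int N + int j)) / w (b - int N - 1)) (b - int N - 1)"
    using Suc B_sv[OF B_inv] nz by simp
  also have "\<dots> = sv (c / (\<Prod>j<Suc N. w (b - int (Suc N) + int j))) (b - int (Suc N))"
    unfolding p by (simp add: algebra_simps)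
  finally show ?case .
qed


definition tn :: "(int \<Rightarrow> complex) \<Rightarrow> nat \<Rightarrow> int \<Rightarrow> real" where
  "tn w N a = (\<Prod>j<N. norm (w (a + int j)))"

lemma tn_step: "tn w N (a+1) * norm (w a) = tn w N a * norm (w (a + int N))"
proof -
  have "tn w (Suc N) a = norm (w a) * tn w N (a+1)"
    unfolding tn_def by (subst prod.lessThan_Suc_shift) (simp add: algebra_simps)
  moreover have "tn w (Suc N) a = tn w N a * norm (w (a + int N))"
    unfolding tn_def by simp
  ultimately show ?thesis by (simp add: algebra_simps)
qed

lemma tn_pos: "(\<And>j. w j \<noteq> 0) \<Longrightarrow> tn w N a > 0"
  unfolding tn_def by (intro prod_pos) auto

lemma cmp_gen:
  fixes g :: "int \<Rightarrow> real"
  assumes K: "K \<ge> 0" and up: "\<And>a. g (a+1) \<le> K * g a" and dn: "\<And>a. g a \<le> K * g (a+1)"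
    and pos: "\<And>a. g a \<ge> 0"
  shows "g a \<le> K ^ nat \<bar>a - b\<bar> * g b"
proof -
  have A: "g (b + int d) \<le> K ^ d * g b" for d
  proof (induction d)
    case 0 then show ?case by simp
  next
    case (Suc d)
    have "g (b + int (Suc d)) = g ((b + int d) + 1)" by (simp add: algebra_simps)
    also have "\<dots> \<le> K * g (b + int d)" by (rule up)
    also have "\<dots> \<le> K * (K ^ d * g b)" using Suc K by (simp add: mult_left_mono)
    finally show ?case by (simp add: algebra_simps)
  qed
  have B: "g (b - int d) \<le> K ^ d * g b" for d
  proof (induction d)
    case 0 then show ?case by simp
  next
    case (Suc d)
    have "g (b - int (Suc d)) \<le> K * g ((b - int (Suc d)) + 1)" by (rule dn)
    also have "(b - int (Suc d)) + 1 = b - int d" by simp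
    also have "K * g (b - int d) \<le> K * (K ^ d * g b)" using Suc K by (simp add: mult_left_mono)
    finally show ?case by (simp add: algebra_simps)
  qed
  show ?thesis
  proof (cases "a \<ge> b")
    case True
    then have "a = b + int (nat \<bar>a - b\<bar>)" by simp
    then show ?thesis using A by metis
  next
    case False
    then have "a = b - int (nat \<bar>a - b\<bar>)" by simp
    then show ?thesis using B by metis
  qed
qed

lemma cmp_rel:
  fixes g :: "int \<Rightarrow> real" and u v :: "int \<Rightarrow> real"
  assumes rel: "\<And>a. g (a+1) * u a = g a * v a"
    and d: "0 < d" and bu: "\<And>a. d \<le> u a \<and> u a \<le> M" and bv: "\<And>a. d \<le> v a \<and> v a \<le> M"
    and pos: "\<And>a. g a \<ge> 0"
  shows "g a \<le> (M/d) ^ nat \<bar>a - b\<bar> * g b"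
proof (rule cmp_gen)
  show "0 \<le> M/d" using bu[of 0] d by simp
  show "g (a+1) \<le> M/d * g a" for a
  proof -
    have "g (a+1) * d \<le> g (a+1) * u a" using bu[of a] pos[of "a+1"] by (simp add: mult_left_mono)
    also have "\<dots> = g a * v a" by (rule rel)
    also have "\<dots> \<le> g a * M" using bv[of a] pos[of a] by (simp add: mult_left_mono)
    finally show ?thesis using d by (simp add: field_simps)
  qed
  show "g a \<le> M/d * g (a+1)" for a
  proof -
    have "g a * d \<le> g a * v a" using bv[of a] pos[of a] by (simp add: mult_left_mono)
    also have "\<dots> = g (a+1) * u a" by (rule rel[symmetric])
    also have "\<dots> \<le> g (a+1) * M" using bu[of a] pos[of "a+1"] by (simp add: mult_left_mono)
    finally show ?thesis using d by (simp add: field_simps)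
  qed
  show "g a \<ge> 0" for a by (rule pos)
qed

theorem mainTheorem7:
  fixes w :: "int \<Rightarrow> complex"
    and B :: "(int \<Rightarrow> complex) \<Rightarrow> (int \<Rightarrow> complex)"
    and n :: "nat \<Rightarrow> nat"
    and m :: "nat \<Rightarrow> int"
  assumes weights: "\<exists>a b. 0 < a \<and> (\<forall>j. a \<le> norm (w j) \<and> norm (w j) \<le> b)"
    and B_inv: "\<forall>x\<in>ell2. B x \<in> ell2 \<and> B (wshift w x) = x \<and> wshift w (B x) = x"
    and n_incr: "strict_mono n" and n_pos: "\<forall>k. 0 < n k"
    and invariant: "\<forall>k. (wshift w ^^ n k) ` closed_span (range (\<lambda>i. e (m i)))
                          \<subseteq> closed_span (range (\<lambda>i. e (m i)))"
  shows "((\<exists>i. (\<lambda>k. l2norm ((wshift w ^^ n k) (e (m i)))) \<longlonglongrightarrow> 0)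
           \<longrightarrow> (\<forall>r. (\<lambda>k. l2norm ((wshift w ^^ n k) (e (m r)))) \<longlonglongrightarrow> 0))
         \<and> ((\<exists>i j. (\<lambda>k. l2norm ((wshift w ^^ n k) (e (m i))) * l2norm ((B ^^ n k) (e (m j))))
                   \<longlonglongrightarrow> 0)
           \<longrightarrow> (\<forall>r p. (\<lambda>k. l2norm ((wshift w ^^ n k) (e (m r))) * l2norm ((B ^^ n k) (e (m p))))
                   \<longlonglongrightarrow> 0))"
proof -
  obtain d M where dM: "0 < d" "\<And>j. d \<le> norm (w j) \<and> norm (w j) \<le> M" using weights by blast
  have nz: "\<And>j. w j \<noteq> 0" using dM by (metis norm_zero not_le)
  have tp: "\<And>N a. 0 < tn w N a" using tn_pos nz by blast
  define K where "K = M / d"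
  have TN: "l2norm ((wshift w ^^ N) (e a)) = tn w N a" for N a
    unfolding e_sv T_pow sv_norm tn_def by (simp add: prod_norm[symmetric])
  have BN: "l2norm ((B ^^ N) (e a)) = 1 / tn w N (a - int N)" for N a
    unfolding e_sv B_pow[OF B_inv nz] sv_norm tn_def by (simp add: prod_norm[symmetric] norm_divide)
  have CT: "tn w N a \<le> K ^ nat \<bar>a - b\<bar> * tn w N b" for N a b
    unfolding K_def
    by (rule cmp_rel[where u="\<lambda>a. norm (w a)" and v="\<lambda>a. norm (w (a + int N))"])
       (use tn_step dM tp in \<open>auto intro: less_imp_le\<close>)
  have CB: "1 / tn w N (a - int N) \<le> K ^ nat \<bar>a - b\<bar> * (1 / tn w N (b - int N))" for N a b
  proof -
    have rel: "1 / tn w N (x + 1 - int N) * norm (w x) = 1 / tn w N (x - int N) * norm (w (x - int N))" for x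
    proof -
      have s: "tn w N (x - int N + 1) * norm (w (x - int N)) = tn w N (x - int N) * norm (w x)"
        using tn_step[of w N "x - int N"] by simp
      have "x + 1 - int N = x - int N + 1" by simp
      then show ?thesis using s tp[of N "x - int N"] tp[of N "x - int N + 1"]
        by (simp add: field_simps)
    qed
    show ?thesis unfolding K_def
      by (rule cmp_rel[where g="\<lambda>a. 1 / tn w N (a - int N)" and u="\<lambda>a. norm (w a)"
            and v="\<lambda>a. norm (w (a - int N))"])
         (use rel dM tp in \<open>auto intro: less_imp_le\<close>)
  qed
  have Kpos: "K \<ge> 0" unfolding K_def using dM(1) dM(2)[of 0] by simp
  show ?thesis
  proof (intro conjI impI allI)
    fix r assume "\<exists>i. (\<lambda>k. l2norm ((wshift w ^^ n k) (e (m i)))) \<longlonglongrightarrow> 0"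
    then obtain i where i: "(\<lambda>k. tn w (n k) (m i)) \<longlonglongrightarrow> 0" unfolding TN by blast
    have "(\<lambda>k. K ^ nat \<bar>m r - m i\<bar> * tn w (n k) (m i)) \<longlonglongrightarrow> 0"
      using tendsto_mult_right_zero[OF i] by simp
    then have "(\<lambda>k. tn w (n k) (m r)) \<longlonglongrightarrow> 0"
      by (rule Lim_null_comparison[rotated]) (use CT tp in \<open>auto intro: always_eventually simp: less_imp_le\<close>)
    then show "(\<lambda>k. l2norm ((wshift w ^^ n k) (e (m r)))) \<longlonglongrightarrow> 0" unfolding TN .
  next
    fix r p assume "\<exists>i j. (\<lambda>k. l2norm ((wshift w ^^ n k) (e (m i))) * l2norm ((B ^^ n k) (e (m j)))) \<longlonglongrightarrow> 0"
    then obtain i j where ij: "(\<lambda>k. tn w (n k) (m i) * (1 / tn w (n k) (m j - int (n k)))) \<longlonglongrightarrow> 0"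
      unfolding TN BN by blast
    define C where "C = K ^ nat \<bar>m r - m i\<bar> * K ^ nat \<bar>m p - m j\<bar>"
    have lim: "(\<lambda>k. C * (tn w (n k) (m i) * (1 / tn w (n k) (m j - int (n k))))) \<longlonglongrightarrow> 0"
      using tendsto_mult_right_zero[OF ij] by simp
    have bnd: "norm (tn w (n k) (m r) * (1 / tn w (n k) (m p - int (n k))))
        \<le> C * (tn w (n k) (m i) * (1 / tn w (n k) (m j - int (n k))))" for k
    proof -
      have p1: "0 < tn w (n k) (m r)" "0 < 1 / tn w (n k) (m p - int (n k))"
        using tp by auto
      have "tn w (n k) (m r) * (1 / tn w (n k) (m p - int (n k)))
          \<le> (K ^ nat \<bar>m r - m i\<bar> * tn w (n k) (m i)) * (K ^ nat \<bar>m p - m j\<bar> * (1 / tn w (n k) (m j - int (n k))))"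
      proof (rule mult_mono[OF CT CB])
        have "0 \<le> K ^ nat \<bar>m r - m i\<bar>" using Kpos by simp
        moreover have "0 \<le> tn w (n k) (m i)" using tp[of "n k" "m i"] by linarith
        ultimately show "0 \<le> K ^ nat \<bar>m r - m i\<bar> * tn w (n k) (m i)" by (rule mult_nonneg_nonneg)
        show "0 \<le> 1 / tn w (n k) (m p - int (n k))" using p1(2) by linarith
      qed
      then show ?thesis using p1 unfolding C_def by (simp add: algebra_simps)
    qed
    have "(\<lambda>k. tn w (n k) (m r) * (1 / tn w (n k) (m p - int (n k)))) \<longlonglongrightarrow> 0"
      by (rule Lim_null_comparison[OF always_eventually[OF allI[OF bnd]] lim])
    then show "(\<lambda>k. l2norm ((wshift w ^^ n k) (e (m r))) * l2norm ((B ^^ n k) (e (m p)))) \<longlonglongrightarrow> 0"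
      unfolding TN BN .
  qed
qed

end
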